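(* Consider the finite-difference scheme described in the context, with grid parameters $T>0$, $M,N\ge 2$, $\tau=T/M$, $h=1/N$, nonnegative constants $\beta,\gamma,\delta,\mu$, $\varepsilon\in[0,1]$, diffusion constants $\sigma_i>0$, and given grid strategy values $\alpha^i_{k,j}$ with $\alpha^i_{k,0}=\alpha^i_{k,N}=0$, satisfying $h^2\le 4\tau\sigma_i^2$ and $\tau|\alpha^i_{k,j}|\le h/4$ for all $i,k,j$. Then for each $i\in\{S,I,R,C\}$ the solution satisfies $$\max_{0\le k\le M}\|m^{i,h}(t_k,\cdot)\|_{1,h}\le \|m^i_0(\cdot)\|_{1,h}+T\max_{0\le k\le M}\|f^{i,h}(t_k,\cdot)\|_{1,h},$$ where for a grid function $w$ on the points $x_{j+1/2}$, $\|w\|_{1,h}:=\sum_{j=0}^{N-1}|w_{j+1/2}|\,h$, $m^{i,h}(t_k,\cdot)=(m^{i,h}_{k,j+1/2})_{j}$, $m^i_0(\cdot)=(m^i_0(x_{j+1/2}))_j$, and $f^{i,h}(t_k,\cdot)=(f^{i,h}_{k,j+1/2})_j$.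
   Context: Grid: $t_k=k\tau$ ($k=0,\dots,M$), $x_j=jh$ ($j=0,\dots,N$), $x_{j+1/2}=(j+1/2)h$. The four compartments are $i\in\{S,I,R,C\}$. Grid strategy values $\alpha^i_{k,j}$ are given for $k=0,\dots,M$, $j=0,\dots,N$. For $k=1,\dots,M$, $j=0,\dots,N-1$ define $$\gamma^{i,1}_{k,j+1/2}=\tfrac{1}{8\tau}\big(1+\tfrac{4\tau}{h}\alpha^i_{k,j}\big),\quad \gamma^{i,2}_{k,j+1/2}=\tfrac{1}{8\tau}\big(3+\tfrac{4\tau}{h}\alpha^i_{k,j}\big)+\tfrac{1}{8\tau}\big(3-\tfrac{4\tau}{h}\alpha^i_{k,j+1}\big),\quad \gamma^{i,3}_{k,j+1/2}=\tfrac{1}{8\tau}\big(1-\tfrac{4\tau}{h}\alpha^i_{k,j+1}\big).$$ Unknowns are $m^{i,h}_{k,j+1/2}$, $k=0,\dots,M$, $j=0,\dots,N-1$, extended by ghost values (boundary condition) $m^{i,h}_{k,-1/2}:=m^{i,h}_{k,1/2}$, $m^{i,h}_{k,N+1/2}:=m^{i,h}_{k,N-1/2}$. Initial condition: $m^{i,h}_{0,j+1/2}=m^i_0(x_{j+1/2})$ for given functions $m^i_0$ on $[0,1]$. For $k=1,\dots,M$, $j=0,\dots,N-1$, each $i$: $$\Big(\tfrac{1}{8\tau}-\tfrac{\sigma_i^2}{2h^2}\Big)m^{i,h}_{k,j-1/2}+\Big(\tfrac{3}{4\tau}+\tfrac{\sigma_i^2}{h^2}\Big)m^{i,h}_{k,j+1/2}+\Big(\tfrac{1}{8\tau}-\tfrac{\sigma_i^2}{2h^2}\Big)m^{i,h}_{k,j+3/2}$$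 $$= f^{i,h}_{k-1,j+1/2}+\gamma^{i,1}_{k,j+1/2}m^{i,h}_{k-1,j-1/2}+\gamma^{i,2}_{k,j+1/2}m^{i,h}_{k-1,j+1/2}+\gamma^{i,3}_{k,j+1/2}m^{i,h}_{k-1,j+3/2},$$ where for every $k=0,\dots,M$, writing $m^i$ for $m^{i,h}_{k,j+1/2}$: $f^{S,h}_{k,j+1/2}=-\beta m^S m^I+\mu m^C$; $f^{I,h}_{k,j+1/2}=\beta m^S m^I+\varepsilon\beta m^C m^I-\gamma m^I$; $f^{R,h}_{k,j+1/2}=(1-\varepsilon)\beta m^C m^I+\gamma m^I-\delta m^R$; $f^{C,h}_{k,j+1/2}=\delta m^R-\beta m^C m^I-\mu m^C$. *)

theory Defs
  imports Complex_Main
begin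

datatype comp = cS | cI | cR | cC

text \<open>Grid unknowns are represented as m :: comp => nat => nat => real, where
  m i k j stands for m^{i,h}_{k,j+1/2} (k = 0..M, j = 0..N-1).
  Ghost values (Neumann-type boundary condition): the left neighbour of cell 0
  is cell 0 itself, the right neighbour of cell N-1 is cell N-1 itself.\<close>

definition mleft :: "(nat \<Rightarrow> real) \<Rightarrow> nat \<Rightarrow> real" where
  "mleft w j = (if j = 0 then w 0 else w (j - 1))"

definition mright :: "nat \<Rightarrow> (nat \<Rightarrow> real) \<Rightarrow> nat \<Rightarrow> real" where
  "mright N w j = (if j + 1 \<ge> N then w (N - 1) else w (j + 1))"

definition freact :: "real \<Rightarrow> real \<Rightarrow> real \<Rightarrow> real \<Rightarrow> real \<Rightarrow>
    (comp \<Rightarrow> nat \<Rightarrow> nat \<Rightarrow> real) \<Rightarrow> comp \<Rightarrow> nat \<Rightarrow> nat \<Rightarrow> real" where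
  "freact \<beta> \<gamma> \<delta> \<mu> \<epsilon> m i k j =
     (let S = m cS k j; I = m cI k j; R = m cR k j; C = m cC k j in
      case i of
        cS \<Rightarrow> - \<beta> * S * I + \<mu> * C
      | cI \<Rightarrow> \<beta> * S * I + \<epsilon> * \<beta> * C * I - \<gamma> * I
      | cR \<Rightarrow> (1 - \<epsilon>) * \<beta> * C * I + \<gamma> * I - \<delta> * R
      | cC \<Rightarrow> \<delta> * R - \<beta> * C * I - \<mu> * C)"

definition norm1h :: "nat \<Rightarrow> real \<Rightarrow> (nat \<Rightarrow> real) \<Rightarrow> real" where
  "norm1h N h w = (\<Sum>j<N. \<bar>w j\<bar> * h)"

definition gam1 :: "real \<Rightarrow> real \<Rightarrow> (nat \<Rightarrow> nat \<Rightarrow> real) \<Rightarrow> nat \<Rightarrow> nat \<Rightarrow> real" where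
  "gam1 \<tau> h a k j = 1 / (8 * \<tau>) * (1 + 4 * \<tau> / h * a k j)"

definition gam2 :: "real \<Rightarrow> real \<Rightarrow> (nat \<Rightarrow> nat \<Rightarrow> real) \<Rightarrow> nat \<Rightarrow> nat \<Rightarrow> real" where
  "gam2 \<tau> h a k j = 1 / (8 * \<tau>) * (3 + 4 * \<tau> / h * a k j)
                    + 1 / (8 * \<tau>) * (3 - 4 * \<tau> / h * a k (j + 1))"

definition gam3 :: "real \<Rightarrow> real \<Rightarrow> (nat \<Rightarrow> nat \<Rightarrow> real) \<Rightarrow> nat \<Rightarrow> nat \<Rightarrow> real" where
  "gam3 \<tau> h a k j = 1 / (8 * \<tau>) * (1 - 4 * \<tau> / h * a k (j + 1))"

definition scheme_eq ::
  "nat \<Rightarrow> real \<Rightarrow> real \<Rightarrow> (comp \<Rightarrow> real) \<Rightarrow> (comp \<Rightarrow> nat \<Rightarrow> nat \<Rightarrow> real)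
   \<Rightarrow> real \<Rightarrow> real \<Rightarrow> real \<Rightarrow> real \<Rightarrow> real
   \<Rightarrow> (comp \<Rightarrow> nat \<Rightarrow> nat \<Rightarrow> real) \<Rightarrow> comp \<Rightarrow> nat \<Rightarrow> nat \<Rightarrow> bool" where
  "scheme_eq N \<tau> h \<sigma> \<alpha> \<beta> \<gamma> \<delta> \<mu> \<epsilon> m i k j \<longleftrightarrow>
     (1 / (8 * \<tau>) - (\<sigma> i)\<^sup>2 / (2 * h\<^sup>2)) * mleft (m i k) j
     + (3 / (4 * \<tau>) + (\<sigma> i)\<^sup>2 / h\<^sup>2) * m i k j
     + (1 / (8 * \<tau>) - (\<sigma> i)\<^sup>2 / (2 * h\<^sup>2)) * mright N (m i k) j
   = freact \<beta> \<gamma> \<delta> \<mu> \<epsilon> m i (k - 1) j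
     + gam1 \<tau> h (\<alpha> i) k j * mleft (m i (k - 1)) j
     + gam2 \<tau> h (\<alpha> i) k j * m i (k - 1) j
     + gam3 \<tau> h (\<alpha> i) k j * mright N (m i (k - 1)) j"

end

theory Submission
  imports Defs
begin


lemma lr_sum:
  assumes "N \<ge> 1"
  shows "(\<Sum>j<N. \<bar>mleft w j\<bar>) + (\<Sum>j<N. \<bar>mright N w j\<bar>) = 2 * (\<Sum>j<N. \<bar>w j\<bar>)"
proof -
  obtain n where N: "N = Suc n" using assms by (cases N) auto
  have 1: "(\<Sum>j<N. \<bar>mleft w j\<bar>) = \<bar>w 0\<bar> + (\<Sum>j<n. \<bar>w j\<bar>)"
    unfolding N sum.lessThan_Suc_shift by (simp add: mleft_def)
  have 2: "(\<Sum>j<N. \<bar>mright N w j\<bar>) = (\<Sum>j<n. \<bar>w (Suc j)\<bar>) + \<bar>w n\<bar>"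
    unfolding N sum.lessThan_Suc by (auto simp: mright_def intro!: sum.cong)
  have 3: "(\<Sum>j<N. \<bar>w j\<bar>) = \<bar>w 0\<bar> + (\<Sum>j<n. \<bar>w (Suc j)\<bar>)"
    unfolding N sum.lessThan_Suc_shift ..
  have 4: "(\<Sum>j<N. \<bar>w j\<bar>) = (\<Sum>j<n. \<bar>w j\<bar>) + \<bar>w n\<bar>"
    unfolding N sum.lessThan_Suc ..
  show ?thesis using 1 2 3 4 by linarith
qed

lemma ptA:
  fixes a d x y z :: real
  assumes "a \<le> 0" "d \<ge> 0"
  shows "d*\<bar>y\<bar> + a*\<bar>x\<bar> + a*\<bar>z\<bar> \<le> \<bar>a*x + d*y + a*z\<bar>"
proof -
  have "\<bar>a*x\<bar> = -a*\<bar>x\<bar>" "\<bar>a*z\<bar> = -a*\<bar>z\<bar>" "\<bar>d*y\<bar> = d*\<bar>y\<bar>"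
    using assms by (auto simp: abs_mult)
  moreover have "\<forall>p r s::real. \<bar>r\<bar> \<le> \<bar>p+r+s\<bar> + \<bar>p\<bar> + \<bar>s\<bar>" by arith
  moreover have "\<bar>d*y\<bar> \<le> \<bar>a*x + d*y + a*z\<bar> + \<bar>a*x\<bar> + \<bar>a*z\<bar>"
    using calculation(4) by blast
  ultimately show ?thesis by linarith
qed

lemma lowA:
  fixes a d :: real
  assumes "N \<ge> 1" "a \<le> 0" "d + 2*a = 1"
  shows "(\<Sum>j<N. \<bar>w j\<bar>) \<le> (\<Sum>j<N. \<bar>a * mleft w j + d * w j + a * mright N w j\<bar>)"
proof -
  have "(\<Sum>j<N. d*\<bar>w j\<bar> + a*\<bar>mleft w j\<bar> + a*\<bar>mright N w j\<bar>)
        \<le> (\<Sum>j<N. \<bar>a * mleft w j + d * w j + a * mright N w j\<bar>)"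
    by (rule sum_mono, rule ptA) (use assms in auto)
  moreover have "(\<Sum>j<N. d*\<bar>w j\<bar> + a*\<bar>mleft w j\<bar> + a*\<bar>mright N w j\<bar>)
       = d * (\<Sum>j<N. \<bar>w j\<bar>) + a * ((\<Sum>j<N. \<bar>mleft w j\<bar>) + (\<Sum>j<N. \<bar>mright N w j\<bar>))"
    by (simp add: sum.distrib sum_distrib_left algebra_simps)
  moreover have "d * (\<Sum>j<N. \<bar>w j\<bar>) + a * (2 * (\<Sum>j<N. \<bar>w j\<bar>)) = (d + 2*a) * (\<Sum>j<N. \<bar>w j\<bar>)"
    by (simp add: algebra_simps)
  ultimately show ?thesis using lr_sum[OF assms(1), of w] assms(3)
    by simp
qed

lemma upB:
  fixes q :: "nat \<Rightarrow> real"
  assumes "N \<ge> 1" "q 0 = 0" "q N = 0" "\<And>j. j \<le> N \<Longrightarrow> \<bar>q j\<bar> \<le> 1/8"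
  shows "(\<Sum>j<N. \<bar>(1/8 + q j) * mleft w j + (3/4 + q j - q (Suc j)) * w j
                 + (1/8 - q (Suc j)) * mright N w j\<bar>) \<le> (\<Sum>j<N. \<bar>w j\<bar>)"
proof -
  define F where "F j = q j * \<bar>mleft w j\<bar>" for j
  define G where "G j = q j * \<bar>w j\<bar>" for j
  have pt: "\<bar>(1/8 + q j) * mleft w j + (3/4 + q j - q (Suc j)) * w j
                 + (1/8 - q (Suc j)) * mright N w j\<bar>
      \<le> (1/8) * (\<bar>mleft w j\<bar> + \<bar>mright N w j\<bar>) + 3/4 * \<bar>w j\<bar>
         + (F j - F (Suc j)) + (G j - G (Suc j))" if j: "j < N" for j
  proof -
    have q1: "\<bar>q j\<bar> \<le> 1/8" "\<bar>q (Suc j)\<bar> \<le> 1/8" using j assms(4) by auto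
    have e1: "q (Suc j) * \<bar>w j\<bar> = F (Suc j)" by (simp add: F_def mleft_def)
    have e2: "q (Suc j) * \<bar>mright N w j\<bar> = G (Suc j)"
    proof (cases "Suc j < N")
      case True then show ?thesis by (simp add: G_def mright_def)
    next
      case False then have "Suc j = N" using j by simp
      then show ?thesis using assms(3) by (simp add: G_def)
    qed
    have "\<bar>(1/8 + q j) * mleft w j + (3/4 + q j - q (Suc j)) * w j
                 + (1/8 - q (Suc j)) * mright N w j\<bar>
        \<le> (1/8 + q j) * \<bar>mleft w j\<bar> + (3/4 + q j - q (Suc j)) * \<bar>w j\<bar>
                 + (1/8 - q (Suc j)) * \<bar>mright N w j\<bar>"
    proof -
      have "\<bar>(1/8 + q j) * mleft w j\<bar> = (1/8 + q j) * \<bar>mleft w j\<bar>"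
           "\<bar>(3/4 + q j - q (Suc j)) * w j\<bar> = (3/4 + q j - q (Suc j)) * \<bar>w j\<bar>"
           "\<bar>(1/8 - q (Suc j)) * mright N w j\<bar> = (1/8 - q (Suc j)) * \<bar>mright N w j\<bar>"
        using q1 by (auto simp: abs_mult)
      then show ?thesis by (smt (verit))
    qed
    also have "\<dots> = (1/8) * (\<bar>mleft w j\<bar> + \<bar>mright N w j\<bar>) + 3/4 * \<bar>w j\<bar>
         + (F j - F (Suc j)) + (G j - G (Suc j))"
      by (simp only: e1[symmetric] e2[symmetric]) (simp add: F_def G_def algebra_simps)
    finally show ?thesis .
  qed
  have "(\<Sum>j<N. \<bar>(1/8 + q j) * mleft w j + (3/4 + q j - q (Suc j)) * w j
                 + (1/8 - q (Suc j)) * mright N w j\<bar>)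
     \<le> (\<Sum>j<N. (1/8) * (\<bar>mleft w j\<bar> + \<bar>mright N w j\<bar>) + 3/4 * \<bar>w j\<bar>
         + (F j - F (Suc j)) + (G j - G (Suc j)))"
    by (rule sum_mono) (use pt in auto)
  also have "\<dots> = (1/8) * ((\<Sum>j<N. \<bar>mleft w j\<bar>) + (\<Sum>j<N. \<bar>mright N w j\<bar>))
       + 3/4 * (\<Sum>j<N. \<bar>w j\<bar>) + (\<Sum>j<N. F j - F (Suc j)) + (\<Sum>j<N. G j - G (Suc j))"
    by (simp only: sum.distrib sum_distrib_left[symmetric])
  also have "\<dots> = (\<Sum>j<N. \<bar>w j\<bar>)"
    unfolding sum_lessThan_telescope' lr_sum[OF assms(1)]
    using assms(2,3) by (simp add: F_def G_def)
  finally show ?thesis .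
qed


theorem proposition2:
  fixes T :: real and M N :: nat and \<tau> h :: real
    and \<beta> \<gamma> \<delta> \<mu> \<epsilon> :: real
    and \<sigma> :: "comp \<Rightarrow> real"
    and \<alpha> :: "comp \<Rightarrow> nat \<Rightarrow> nat \<Rightarrow> real"
    and m0 :: "comp \<Rightarrow> real \<Rightarrow> real"
    and m :: "comp \<Rightarrow> nat \<Rightarrow> nat \<Rightarrow> real"
  assumes "T > 0" and "M \<ge> 2" and "N \<ge> 2"
    and "\<tau> = T / real M" and "h = 1 / real N"
    and "\<beta> \<ge> 0" and "\<gamma> \<ge> 0" and "\<delta> \<ge> 0" and "\<mu> \<ge> 0"
    and "0 \<le> \<epsilon>" and "\<epsilon> \<le> 1"
    and "\<And>i. \<sigma> i > 0"
    and "\<And>i k. k \<le> M \<Longrightarrow> \<alpha> i k 0 = 0"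
    and "\<And>i k. k \<le> M \<Longrightarrow> \<alpha> i k N = 0"
    and "\<And>i. h\<^sup>2 \<le> 4 * \<tau> * (\<sigma> i)\<^sup>2"
    and "\<And>i k j. k \<le> M \<Longrightarrow> j \<le> N \<Longrightarrow> \<tau> * \<bar>\<alpha> i k j\<bar> \<le> h / 4"
    and init: "\<And>i j. j < N \<Longrightarrow> m i 0 j = m0 i ((real j + 1 / 2) * h)"
    and scheme: "\<And>i k j. 1 \<le> k \<Longrightarrow> k \<le> M \<Longrightarrow> j < N \<Longrightarrow>
                   scheme_eq N \<tau> h \<sigma> \<alpha> \<beta> \<gamma> \<delta> \<mu> \<epsilon> m i k j"
  shows "\<forall>i. Max ((\<lambda>k. norm1h N h (m i k)) ` {..M})
           \<le> norm1h N h (\<lambda>j. m0 i ((real j + 1 / 2) * h))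
             + T * Max ((\<lambda>k. norm1h N h (freact \<beta> \<gamma> \<delta> \<mu> \<epsilon> m i k)) ` {..M})"
proof
  fix i
  have tau: "\<tau> > 0" using assms(1,2,4) by simp
  have hpos: "h > 0" using assms(3,5) by simp
  have N1: "N \<ge> 1" using assms(3) by simp
  define F where "F k = freact \<beta> \<gamma> \<delta> \<mu> \<epsilon> m i k" for k
  define S where "S w = (\<Sum>j<N. \<bar>w j\<bar>)" for w :: "nat \<Rightarrow> real"
  have nS: "norm1h N h w = h * S w" for w
    unfolding norm1h_def S_def sum_distrib_left by (simp add: mult.commute)
  have step: "S (m i k) \<le> S (m i (k-1)) + \<tau> * S (F (k-1))" if k: "1 \<le> k" "k \<le> M" for k
  proof -
    define A1 where "A1 = 1 / (8 * \<tau>) - (\<sigma> i)\<^sup>2 / (2 * h\<^sup>2)"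
    define A2 where "A2 = 3 / (4 * \<tau>) + (\<sigma> i)\<^sup>2 / h\<^sup>2"
    define q where "q j = \<tau> * \<alpha> i k j / (2 * h)" for j
    define w where "w = m i k"
    define v where "v = m i (k-1)"
    have e1: "\<tau> * A1 = 1/8 - \<tau> * (\<sigma> i)\<^sup>2 / (2 * h\<^sup>2)"
      unfolding A1_def using tau by (simp add: field_simps)
    have "h\<^sup>2 / 4 \<le> \<tau> * (\<sigma> i)\<^sup>2" using assms(15)[of i] by simp
    then have "1/8 \<le> \<tau> * (\<sigma> i)\<^sup>2 / (2 * h\<^sup>2)" using hpos
      by (simp add: field_simps)
    then have a0: "\<tau> * A1 \<le> 0" using e1 by simp
    have ad: "\<tau> * A2 + 2 * (\<tau> * A1) = 1"
      unfolding A1_def A2_def using tau hpos by (simp add: field_simps)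
    have "S w \<le> (\<Sum>j<N. \<bar>(\<tau>*A1) * mleft w j + (\<tau>*A2) * w j + (\<tau>*A1) * mright N w j\<bar>)"
      unfolding S_def by (rule lowA[OF N1 a0 ad])
    also have "\<dots> = (\<Sum>j<N. \<tau> * \<bar>F (k-1) j + gam1 \<tau> h (\<alpha> i) k j * mleft v j
         + gam2 \<tau> h (\<alpha> i) k j * v j + gam3 \<tau> h (\<alpha> i) k j * mright N v j\<bar>)"
    proof (rule sum.cong)
      fix j assume "j \<in> {..<N}"
      then have "scheme_eq N \<tau> h \<sigma> \<alpha> \<beta> \<gamma> \<delta> \<mu> \<epsilon> m i k j" using scheme k by simp
      then have "A1 * mleft w j + A2 * w j + A1 * mright N w j = F (k-1) j + gam1 \<tau> h (\<alpha> i) k j * mleft v j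
         + gam2 \<tau> h (\<alpha> i) k j * v j + gam3 \<tau> h (\<alpha> i) k j * mright N v j"
        unfolding scheme_eq_def A1_def A2_def w_def v_def F_def by simp
      moreover have "\<bar>(\<tau>*A1) * mleft w j + (\<tau>*A2) * w j + (\<tau>*A1) * mright N w j\<bar>
          = \<tau> * \<bar>A1 * mleft w j + A2 * w j + A1 * mright N w j\<bar>"
      proof -
        have "(\<tau>*A1) * mleft w j + (\<tau>*A2) * w j + (\<tau>*A1) * mright N w j
           = \<tau> * (A1 * mleft w j + A2 * w j + A1 * mright N w j)" by (simp add: algebra_simps)
        then show ?thesis using tau by (simp add: abs_mult)
      qed
      ultimately show "\<bar>(\<tau>*A1) * mleft w j + (\<tau>*A2) * w j + (\<tau>*A1) * mright N w j\<bar> = \<tau> * \<bar>F (k-1) j + gam1 \<tau> h (\<alpha> i) k j * mleft v j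
         + gam2 \<tau> h (\<alpha> i) k j * v j + gam3 \<tau> h (\<alpha> i) k j * mright N v j\<bar>" by simp
    qed simp
    also have "\<dots> \<le> (\<Sum>j<N. \<tau> * \<bar>F (k-1) j\<bar> + \<bar>(1/8 + q j) * mleft v j + (3/4 + q j - q (Suc j)) * v j
                 + (1/8 - q (Suc j)) * mright N v j\<bar>)"
    proof (rule sum_mono)
      fix j assume "j \<in> {..<N}"
      have g1: "\<tau> * gam1 \<tau> h (\<alpha> i) k j = 1/8 + q j"
        unfolding gam1_def q_def using tau hpos by (simp add: field_simps)
      have g2: "\<tau> * gam2 \<tau> h (\<alpha> i) k j = 3/4 + q j - q (Suc j)"
        unfolding gam2_def q_def using tau hpos by (simp add: field_simps)
      have g3: "\<tau> * gam3 \<tau> h (\<alpha> i) k j = 1/8 - q (Suc j)"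
        unfolding gam3_def q_def using tau hpos by (simp add: field_simps)
      have "\<tau> * \<bar>F (k-1) j + gam1 \<tau> h (\<alpha> i) k j * mleft v j
         + gam2 \<tau> h (\<alpha> i) k j * v j + gam3 \<tau> h (\<alpha> i) k j * mright N v j\<bar>
         = \<bar>\<tau> * F (k-1) j + (\<tau> * gam1 \<tau> h (\<alpha> i) k j) * mleft v j
         + (\<tau> * gam2 \<tau> h (\<alpha> i) k j) * v j + (\<tau> * gam3 \<tau> h (\<alpha> i) k j) * mright N v j\<bar>"
        (is "_ = \<bar>?E\<bar>")
      proof -
        have "?E = \<tau> * (F (k-1) j + gam1 \<tau> h (\<alpha> i) k j * mleft v j
         + gam2 \<tau> h (\<alpha> i) k j * v j + gam3 \<tau> h (\<alpha> i) k j * mright N v j)"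
          by (simp add: algebra_simps)
        then show ?thesis using tau by (simp add: abs_mult)
      qed
      also have "\<dots> \<le> \<bar>\<tau> * F (k-1) j\<bar> + \<bar>(\<tau> * gam1 \<tau> h (\<alpha> i) k j) * mleft v j
         + (\<tau> * gam2 \<tau> h (\<alpha> i) k j) * v j + (\<tau> * gam3 \<tau> h (\<alpha> i) k j) * mright N v j\<bar>"
        using abs_triangle_ineq[of "\<tau> * F (k-1) j" "(\<tau> * gam1 \<tau> h (\<alpha> i) k j) * mleft v j
         + (\<tau> * gam2 \<tau> h (\<alpha> i) k j) * v j + (\<tau> * gam3 \<tau> h (\<alpha> i) k j) * mright N v j"]
        by (simp only: add.assoc)
      finally show "\<tau> * \<bar>F (k-1) j + gam1 \<tau> h (\<alpha> i) k j * mleft v j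
         + gam2 \<tau> h (\<alpha> i) k j * v j + gam3 \<tau> h (\<alpha> i) k j * mright N v j\<bar>
         \<le> \<tau> * \<bar>F (k-1) j\<bar> + \<bar>(1/8 + q j) * mleft v j + (3/4 + q j - q (Suc j)) * v j
                 + (1/8 - q (Suc j)) * mright N v j\<bar>"
        unfolding g1 g2 g3 using tau by (simp add: abs_mult)
    qed
    also have "\<dots> = \<tau> * S (F (k-1)) + (\<Sum>j<N. \<bar>(1/8 + q j) * mleft v j + (3/4 + q j - q (Suc j)) * v j
                 + (1/8 - q (Suc j)) * mright N v j\<bar>)"
      unfolding S_def by (simp add: sum.distrib sum_distrib_left)
    also have "\<dots> \<le> \<tau> * S (F (k-1)) + S v"
    proof -
      have "q 0 = 0" "q N = 0" unfolding q_def using assms(13,14) k by auto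
      moreover have "\<bar>q j\<bar> \<le> 1/8" if "j \<le> N" for j
      proof -
        have "\<tau> * \<bar>\<alpha> i k j\<bar> \<le> h / 4" using assms(16) k that by simp
        then show ?thesis unfolding q_def using tau hpos
          by (simp add: abs_mult abs_divide field_simps)
      qed
      ultimately show ?thesis unfolding S_def using upB[OF N1, of q v] by simp
    qed
    finally show ?thesis unfolding w_def v_def by simp
  qed
  define Fm where "Fm = Max ((\<lambda>k. norm1h N h (F k)) ` {..M})"
  have Fle: "norm1h N h (F k) \<le> Fm" if "k \<le> M" for k
    unfolding Fm_def using that by (intro Max_ge) auto
  have Fm0: "0 \<le> Fm" using Fle[of 0] nS[of "F 0"] hpos
  proof -
    have "0 \<le> h * S (F 0)" unfolding S_def using hpos by (simp add: sum_nonneg)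
    then show ?thesis using Fle[of 0] nS[of "F 0"] by simp
  qed
  have nstep: "norm1h N h (m i k) \<le> norm1h N h (m i (k-1)) + \<tau> * Fm" if "1 \<le> k" "k \<le> M" for k
  proof -
    have "norm1h N h (m i k) \<le> norm1h N h (m i (k-1)) + \<tau> * norm1h N h (F (k-1))"
    proof -
      have "h * S (m i k) \<le> h * (S (m i (k-1)) + \<tau> * S (F (k-1)))"
        using mult_left_mono[OF step[OF that], of h] hpos by simp
      then show ?thesis unfolding nS by (simp add: algebra_simps)
    qed
    also have "\<dots> \<le> norm1h N h (m i (k-1)) + \<tau> * Fm"
      using Fle[of "k-1"] that tau by (simp add: mult_left_mono)
    finally show ?thesis .
  qed
  have ind: "k \<le> M \<longrightarrow> norm1h N h (m i k) \<le> norm1h N h (m i 0) + real k * \<tau> * Fm" for k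
  proof (induction k)
    case 0 then show ?case by simp
  next
    case (Suc k)
    show ?case
    proof
      assume "Suc k \<le> M"
      then have "norm1h N h (m i (Suc k)) \<le> norm1h N h (m i k) + \<tau> * Fm"
        using nstep[of "Suc k"] by simp
      also have "\<dots> \<le> norm1h N h (m i 0) + real k * \<tau> * Fm + \<tau> * Fm"
        using Suc \<open>Suc k \<le> M\<close> by simp
      finally show "norm1h N h (m i (Suc k)) \<le> norm1h N h (m i 0) + real (Suc k) * \<tau> * Fm"
        by (simp add: algebra_simps)
    qed
  qed
  have m0eq: "norm1h N h (m i 0) = norm1h N h (\<lambda>j. m0 i ((real j + 1 / 2) * h))"
    unfolding norm1h_def using init by simp
  show "Max ((\<lambda>k. norm1h N h (m i k)) ` {..M})
           \<le> norm1h N h (\<lambda>j. m0 i ((real j + 1 / 2) * h))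
             + T * Max ((\<lambda>k. norm1h N h (freact \<beta> \<gamma> \<delta> \<mu> \<epsilon> m i k)) ` {..M})"
    unfolding Fm_def[symmetric, unfolded F_def]
  proof (subst Max_le_iff, simp, simp, intro ballI)
    fix x assume "x \<in> (\<lambda>k. norm1h N h (m i k)) ` {..M}"
    then obtain k where k: "k \<le> M" "x = norm1h N h (m i k)" by auto
    have "real k * \<tau> \<le> real M * \<tau>" using k tau by (simp add: mult_right_mono)
    also have "real M * \<tau> = T" using assms(2,4) by simp
    finally have "real k * \<tau> \<le> T" .
    then have "real k * \<tau> * Fm \<le> T * Fm" using Fm0 by (simp add: mult_right_mono)
    then show "x \<le> norm1h N h (\<lambda>j. m0 i ((real j + 1 / 2) * h)) + T * Fm"
      using ind[of k] k m0eq by simp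
  qed
qed

end
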